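(* The Shapley–Shubik index satisfies the weak subadditivity blocker postulate but not the strong one. That is: (a) For every SVG $\mathcal{G}$ on $N$ and every bloc $I\subseteq N$ all of whose members are YES-blockers, or all of whose members are NO-blockers, we have $\widehat{SS}_I\le \sum_{k\in I} SS_k(\mathcal{G})$. (b) There exist an SVG $\mathcal{G}$ and a bloc $I$ containing a YES-blocker with $\widehat{SS}_I> \sum_{k\in I} SS_k(\mathcal{G})$.
   Context: A simple voting game (SVG) is a pair $\mathcal{G}=(N,\mathcal{W})$ with $N$ a nonempty finite set of $n$ players and $\mathcal{W}\subseteq 2^N$ (the winning sets) such that: - $\mathcal{W}$ is monotone: $S\in\mathcal{W}$ and $S\subseteq T$ imply $T\in\mathcal{W}$; - $\emptyset\notin\mathcal{W}$ and $N\in\mathcal{W}$. A division is an ordered pair $(S,N\setminus S)$ with $S\subseteq N$, where $S$ is the set of YES-voters. Player $k$ is YES-decisive in $(S,N\setminus S)$ if $k\in S\in\mathcal{W}$ and $S\setminus\{k\}\notin\mathcal{W}$. The Shapley–Shubik index is $$SS_k=\sum_{S\subseteq N:\ k\text{ YES-decisive in }S}\frac{(|S|-1)!\,(n-|S|)!}{n!}.$$ Equivalently, $SS_k$ is the fraction of orderings of $N$ in which $k$ is pivotal, i.e. is the first player whose addition to its predecessors makes the set winning. Blockers: a player $b$ is a YES-blocker if $b\in S$ for all $S\in\mathcal{W}$, and a NO-blocker if $b\notin S$ for all $S\notin\mathcal{W}$. Bloc game: for a bloc $I\subseteq N$ with a lead member $i\in I$, the bloc game $\hat{\mathcal{G}}$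 has player set $(N\setminus I)\cup\{i\}$ and winning sets $$\{S\cup\{i\}: S\subseteq N\setminus I,\ S\cup I\in\mathcal{W}\}\cup\{S: S\subseteq N\setminus I,\ S\in\mathcal{W}\}.$$ $\widehat{SS}_I$ is the index of $i$ in $\hat{\mathcal{G}}$. *)

theory Defs
  imports Complex_Main
begin

definition SVG :: "'a set \<Rightarrow> 'a set set \<Rightarrow> bool" where
  "SVG N W \<longleftrightarrow> finite N \<and> N \<noteq> {} \<and> W \<subseteq> Pow N
     \<and> (\<forall>S T. S \<in> W \<and> S \<subseteq> T \<and> T \<subseteq> N \<longrightarrow> T \<in> W)
     \<and> {} \<notin> W \<and> N \<in> W"

definition yes_decisive :: "'a set set \<Rightarrow> 'a \<Rightarrow> 'a set \<Rightarrow> bool" where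
  "yes_decisive W k S \<longleftrightarrow> k \<in> S \<and> S \<in> W \<and> S - {k} \<notin> W"

definition SS :: "'a set \<Rightarrow> 'a set set \<Rightarrow> 'a \<Rightarrow> real" where
  "SS N W k = (\<Sum>S \<in> {S. S \<subseteq> N \<and> yes_decisive W k S}.
      real (fact (card S - 1) * fact (card N - card S)) / real (fact (card N)))"

definition yes_blocker :: "'a set set \<Rightarrow> 'a \<Rightarrow> bool" where
  "yes_blocker W b \<longleftrightarrow> (\<forall>S \<in> W. b \<in> S)"

definition no_blocker :: "'a set \<Rightarrow> 'a set set \<Rightarrow> 'a \<Rightarrow> bool" where
  "no_blocker N W b \<longleftrightarrow> (\<forall>S. S \<subseteq> N \<and> S \<notin> W \<longrightarrow> b \<notin> S)"

definition bloc_players :: "'a set \<Rightarrow> 'a set \<Rightarrow> 'a \<Rightarrow> 'a set" where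
  "bloc_players N I i = (N - I) \<union> {i}"

definition bloc_wins :: "'a set \<Rightarrow> 'a set set \<Rightarrow> 'a set \<Rightarrow> 'a \<Rightarrow> 'a set set" where
  "bloc_wins N W I i =
     {S \<union> {i} | S. S \<subseteq> N - I \<and> S \<union> I \<in> W} \<union> {S. S \<subseteq> N - I \<and> S \<in> W}"

definition SS_bloc :: "'a set \<Rightarrow> 'a set set \<Rightarrow> 'a set \<Rightarrow> 'a \<Rightarrow> real" where
  "SS_bloc N W I i = SS (bloc_players N I i) (bloc_wins N W I i) i"

end

theory Submission
  imports Defs
begin


lemma cheb:
  fixes f W :: "nat \<Rightarrow> real"
  assumes mf: "mono f" and mW: "mono W" and s0: "(\<Sum>t\<le>K. W t) = 0"
  shows "(\<Sum>t\<le>K. f t * W t) \<ge> 0"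
proof -
  have nn: "0 \<le> (f i - f j) * (W i - W j)" for i j
  proof (cases "i \<le> j")
    case True
    then have "f i \<le> f j" "W i \<le> W j" using mf mW by (auto dest: monoD)
    then show ?thesis by (simp add: mult_nonpos_nonpos)
  next
    case False
    then have "j \<le> i" by simp
    then have "f j \<le> f i" "W j \<le> W i" using mf mW by (auto dest: monoD)
    then show ?thesis by simp
  qed
  have inner: "(\<Sum>j\<le>K. (f i - f j) * (W i - W j)) =
      real (K+1) * (f i * W i) - W i * (\<Sum>j\<le>K. f j) + (\<Sum>j\<le>K. f j * W j)" for i
  proof -
    have "(\<Sum>j\<le>K. (f i - f j) * (W i - W j)) =
       (\<Sum>j\<le>K. f i * W i) - f i * (\<Sum>j\<le>K. W j) - W i * (\<Sum>j\<le>K. f j) + (\<Sum>j\<le>K. f j * W j)"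
      by (simp add: algebra_simps sum_subtractf sum.distrib sum_distrib_left)
    then show ?thesis using s0 by simp
  qed
  have "0 \<le> (\<Sum>i\<le>K. \<Sum>j\<le>K. (f i - f j) * (W i - W j))"
    by (intro sum_nonneg nn)
  also have "\<dots> = (\<Sum>i\<le>K. real (K+1) * (f i * W i) - W i * (\<Sum>j\<le>K. f j) + (\<Sum>j\<le>K. f j * W j))"
    by (simp add: inner)
  also have "\<dots> = (\<Sum>i\<le>K. real (K+1) * (f i * W i)) - (\<Sum>i\<le>K. W i * (\<Sum>j\<le>K. f j)) + (\<Sum>i\<le>K. (\<Sum>j\<le>K. f j * W j))"
    by (simp only: sum_subtractf sum.distrib)
  also have "(\<Sum>i\<le>K. W i * (\<Sum>j\<le>K. f j)) = 0"
    using s0 by (simp add: sum_distrib_right[symmetric])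
  also have "(\<Sum>i\<le>K. real (K+1) * (f i * W i)) = real (K+1) * (\<Sum>t\<le>K. f t * W t)"
    by (simp add: sum_distrib_left)
  also have "(\<Sum>i\<le>K. (\<Sum>j\<le>K. f j * W j)) = real (K+1) * (\<Sum>t\<le>K. f t * W t)"
    by simp
  finally show ?thesis by (simp add: zero_le_mult_iff)
qed

lemma dc:
  assumes fX: "finite X" and UX: "U \<subseteq> Pow X"
    and up: "\<forall>S T. S \<in> U \<and> S \<subseteq> T \<and> T \<subseteq> X \<longrightarrow> T \<in> U"
  shows "card {T\<in>U. card T = t} * (card X - t) \<le> card {T\<in>U. card T = Suc t} * Suc t"
proof -
  let ?A = "Sigma {T\<in>U. card T = t} (\<lambda>T. X - T)"
  let ?B = "Sigma {T\<in>U. card T = Suc t} (\<lambda>T. T)"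
  have fU: "finite U" using fX UX by (meson finite_Pow_iff rev_finite_subset)
  have fin: "finite T" if "T \<in> U" for T using that UX fX by (meson PowD rev_finite_subset subsetD)
  have cA: "card ?A = card {T\<in>U. card T = t} * (card X - t)"
  proof -
    have "card ?A = (\<Sum>T\<in>{T\<in>U. card T = t}. card (X - T))"
      using fU fX by (subst card_SigmaI) auto
    also have "\<dots> = (\<Sum>T\<in>{T\<in>U. card T = t}. card X - t)"
      using UX fin by (intro sum.cong refl) (auto simp: card_Diff_subset)
    finally show ?thesis by simp
  qed
  have cB: "card ?B = card {T\<in>U. card T = Suc t} * Suc t"
  proof -
    have "card ?B = (\<Sum>T\<in>{T\<in>U. card T = Suc t}. card T)"
      using fU fin by (subst card_SigmaI) auto
    also have "\<dots> = (\<Sum>T\<in>{T\<in>U. card T = Suc t}. Suc t)"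
      by (intro sum.cong refl) auto
    finally show ?thesis by simp
  qed
  have inj: "inj_on (\<lambda>(T,x). (insert x T, x)) ?A"
    by (auto simp: inj_on_def) (metis Diff_insert_absorb)+
  have img: "(\<lambda>(T,x). (insert x T, x)) ` ?A \<subseteq> ?B"
  proof
    fix p assume "p \<in> (\<lambda>(T,x). (insert x T, x)) ` ?A"
    then obtain T x where T: "T \<in> U" "card T = t" "x \<in> X" "x \<notin> T" and p: "p = (insert x T, x)"
      by auto
    have "insert x T \<in> U" using up T UX by blast
    moreover have "card (insert x T) = Suc t" using T fin by simp
    ultimately show "p \<in> ?B" using p by simp
  qed
  have fB: "finite ?B" using fU fin by auto
  show ?thesis using card_inj_on_le[OF inj img fB] cA cB by simp
qed

lemma grp:
  fixes h :: "nat \<Rightarrow> real"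
  assumes fX: "finite X" and UX: "U \<subseteq> Pow X"
  shows "(\<Sum>T\<in>U. h (card T)) = (\<Sum>t\<le>card X. real (card {T\<in>U. card T = t}) * h t)"
proof -
  have fU: "finite U" using fX UX by (meson finite_Pow_iff rev_finite_subset)
  have "card ` U \<subseteq> {..card X}" using UX fX by (auto intro: card_mono)
  then have "(\<Sum>t\<le>card X. \<Sum>T\<in>{T\<in>U. card T = t}. h (card T)) = (\<Sum>T\<in>U. h (card T))"
    using sum.group[of U "{..card X}" card "\<lambda>T. h (card T)"] fU by simp
  moreover have "(\<Sum>T\<in>{T\<in>U. card T = t}. h (card T)) = real (card {T\<in>U. card T = t}) * h t" for t
    by simp
  ultimately show ?thesis by simp
qed

lemma core:
  fixes X :: "'a set" and U :: "'a set set" and r :: nat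
  assumes fX: "finite X" and UX: "U \<subseteq> Pow X"
    and up: "\<forall>S T. S \<in> U \<and> S \<subseteq> T \<and> T \<subseteq> X \<longrightarrow> T \<in> U"
  shows "(\<Sum>T\<in>U. fact (card T) * fact (card X - card T) / fact (card X + 1) :: real)
       \<le> real (Suc r) * (\<Sum>T\<in>U. fact (card T + r) * fact (card X - card T) / fact (card X + Suc r))"
proof -
  define K where "K = card X"
  define c where "c t = real (card {T\<in>U. card T = t})" for t
  define d :: "nat \<Rightarrow> real" where "d t = real (Suc r) * (fact (t + r) * fact (K - t) / fact (K + Suc r))
      - fact t * fact (K - t) / fact (K + 1)" for t
  define F where "F t = c (min t K) * fact (min t K) * fact (K - min t K) / fact K" for t
  define Wt :: "nat \<Rightarrow> real" where "Wt t = real ((r+t) choose t) / real (Suc (r+K) choose K) - 1 / real (K+1)" for t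
  have Dpos: "real (Suc (r+K) choose K) > 0" by simp
  have cd: "c t * d t = F t * Wt t" if "t \<le> K" for t
  proof -
    have b1: "real ((r+t) choose t) = fact (r+t) / (fact t * fact r)"
      using binomial_fact[of t "r+t"] by simp
    have b2: "real (Suc (r+K) choose K) = fact (Suc (r+K)) / (fact K * fact (Suc r))"
      using binomial_fact[of K "Suc (r+K)"] by simp
    have key: "\<And>a b c e g h k q R :: real. a>0 \<Longrightarrow> b>0 \<Longrightarrow> c>0 \<Longrightarrow> g>0 \<Longrightarrow> k>0 \<Longrightarrow> q > 0 \<Longrightarrow> R>0 \<Longrightarrow>
       (e/(b*c) / (R*g/(a*(q*c))) - 1/k) * (b*h/a) = q*(e*h/(R*g)) - b*h/(k*a)"
      by (simp add: field_simps)
    have f1: "fact (Suc (r+K)) = (real (r+K) + 1) * (fact (r+K)::real)" by simp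
    have f2: "fact (Suc r) = (real r + 1) * (fact r :: real)" by simp
    have f3: "fact (K+1) = (real K + 1) * (fact K :: real)" by simp
    have f4: "K + Suc r = Suc (r+K)" by simp
    have f5: "t + r = r + t" by simp
    have e: "Wt t * (fact t * fact (K - t) / fact K) = d t"
      unfolding Wt_def d_def b1 b2 f4 f1 f2 f3 f5
      using key[where a="fact K" and b="fact t" and c="fact r" and e="fact (r+t)" and g="fact (r+K)" and h="fact (K-t)" and k="real K + 1" and q="real r + 1" and R="real (r+K) + 1"]
      by (simp add: add.commute[of 1 "real K"] add.commute[of 1 "real r"])
    show ?thesis using that e unfolding F_def by (simp add: field_simps)
  qed
  have Fmono: "mono F"
  proof (rule incseq_SucI)
    fix n
    show "F n \<le> F (Suc n)"
    proof (cases "n < K")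
      case False then show ?thesis by (simp add: F_def min_def)
    next
      case True
      have h: "real (card {T\<in>U. card T = n} * (K - n)) \<le> real (card {T\<in>U. card T = Suc n} * Suc n)"
        using dc[OF fX UX up, of n] unfolding K_def by (simp only: of_nat_le_iff)
      have dcn: "c n * real (K - n) \<le> c (Suc n) * real (Suc n)"
        using h by (simp only: c_def of_nat_mult)
      have kn: "K - n = Suc (K - Suc n)" using True by simp
      have fk: "fact (K - n) = real (K - n) * (fact (K - Suc n) :: real)"
        by (metis kn fact_Suc)
      have m1: "min n K = n" "min (Suc n) K = Suc n" using True by auto
      have "F n = (c n * real (K - n)) * (fact n * fact (K - Suc n)) / fact K"
        unfolding F_def m1 fk by (simp only: mult_ac)
      also have "\<dots> \<le> (c (Suc n) * real (Suc n)) * (fact n * fact (K - Suc n)) / fact K"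
        by (intro divide_right_mono mult_right_mono dcn) auto
      also have "\<dots> = F (Suc n)"
        unfolding F_def m1 fact_Suc by (simp only: mult_ac)
      finally show ?thesis .
    qed
  qed
  have Wmono: "mono Wt"
  proof (rule incseq_SucI)
    fix n
    have "(r+n) choose n \<le> (r + Suc n) choose Suc n"
      by (simp add: binomial_Suc_Suc[of "r+n" n, simplified add_Suc_right[symmetric]])
    then have "real ((r+n) choose n) \<le> real ((r + Suc n) choose Suc n)" by simp
    then show "Wt n \<le> Wt (Suc n)" unfolding Wt_def using Dpos
      by (simp add: divide_right_mono)
  qed
  have Wsum: "(\<Sum>t\<le>K. Wt t) = 0"
  proof -
    have "(\<Sum>t\<le>K. real ((r+t) choose t)) = real (Suc (r+K) choose K)"
      using sum_choose_lower[of r K] by (metis of_nat_sum)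
    then have "(\<Sum>t\<le>K. real ((r+t) choose t) / real (Suc (r+K) choose K)) = 1"
      using Dpos by (simp add: sum_divide_distrib[symmetric])
    then show ?thesis unfolding Wt_def by (simp add: sum_subtractf)
  qed
  have "(\<Sum>T\<in>U. d (card T)) = (\<Sum>t\<le>K. c t * d t)"
    unfolding K_def c_def by (rule grp[OF fX UX])
  also have "\<dots> = (\<Sum>t\<le>K. F t * Wt t)" by (intro sum.cong refl cd) auto
  also have "\<dots> \<ge> 0" by (rule cheb[OF Fmono Wmono Wsum])
  finally have "0 \<le> (\<Sum>T\<in>U. d (card T))" .
  then show ?thesis
    unfolding d_def K_def by (simp add: sum_subtractf sum_distrib_left)
qed

lemma SVG_props:
  assumes "SVG N W"
  shows "finite N" "W \<subseteq> Pow N" "\<And>S T. S \<in> W \<Longrightarrow> S \<subseteq> T \<Longrightarrow> T \<subseteq> N \<Longrightarrow> T \<in> W"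
proof -
  show "finite N" using assms unfolding SVG_def by simp
  show "W \<subseteq> Pow N" using assms unfolding SVG_def by simp
  fix S T assume "S \<in> W" "S \<subseteq> T" "T \<subseteq> N"
  then show "T \<in> W" using assms unfolding SVG_def by metis
qed

lemma yes_case:
  assumes svg: "SVG N W" and IN: "I \<subseteq> N" and iI: "i \<in> I" and yb: "\<forall>b\<in>I. yes_blocker W b"
  shows "SS_bloc N W I i \<le> (\<Sum>k\<in>I. SS N W k)"
proof -
  note P = SVG_props[OF svg]
  define X where "X = N - I"
  define U where "U = {T. T \<subseteq> X \<and> T \<union> I \<in> W}"
  define K where "K = card X"
  have fN: "finite N" by (rule P(1))
  have fI: "finite I" using IN fN finite_subset by blast
  have fX: "finite X" unfolding X_def using fN by simp
  have "card I > 0" using fI iI card_gt_0_iff by blast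
  then obtain r where r: "card I = Suc r" using gr0_implies_Suc by blast
  have cN: "card N = K + Suc r"
    unfolding K_def X_def using card_Diff_subset[OF fI IN] card_mono[OF fN IN] r by simp
  have UX: "U \<subseteq> Pow X" unfolding U_def by auto
  have up: "\<forall>S T. S \<in> U \<and> S \<subseteq> T \<and> T \<subseteq> X \<longrightarrow> T \<in> U"
  proof (intro allI impI)
    fix S T assume h: "S \<in> U \<and> S \<subseteq> T \<and> T \<subseteq> X"
    then have "S \<union> I \<in> W" "S \<union> I \<subseteq> T \<union> I" "T \<union> I \<subseteq> N"
      unfolding U_def X_def using IN by auto
    then have "T \<union> I \<in> W" by (rule P(3))
    then show "T \<in> U" using h unfolding U_def by auto
  qed
  have fT: "finite T" if "T \<in> U" for T using finite_subset[OF _ fX] that UX by blast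
  have disj: "T \<inter> I = {}" if "T \<in> U" for T using that unfolding U_def X_def by auto
  have inW: "I \<subseteq> S" if "S \<in> W" for S using yb that unfolding yes_blocker_def by auto
  have SSk: "SS N W k = (\<Sum>T\<in>U. real (fact (card T + r) * fact (K - card T)) / real (fact (K + Suc r)))"
    if kI: "k \<in> I" for k
  proof -
    have D: "{S. S \<subseteq> N \<and> yes_decisive W k S} = (\<lambda>T. T \<union> I) ` U"
    proof (rule set_eqI, rule iffI)
      fix S assume "S \<in> {S. S \<subseteq> N \<and> yes_decisive W k S}"
      then have S: "S \<subseteq> N" "S \<in> W" unfolding yes_decisive_def by auto
      have IS: "I \<subseteq> S" by (rule inW[OF S(2)])
      have eq: "(S - I) \<union> I = S" using IS by blast
      have "S - I \<in> U" using S IS by (auto simp: U_def X_def Un_absorb2)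
      then have "S - I \<in> U" "S = (S - I) \<union> I" using eq by auto
      then show "S \<in> (\<lambda>T. T \<union> I) ` U" by blast
    next
      fix S assume "S \<in> (\<lambda>T. T \<union> I) ` U"
      then obtain T where T: "T \<in> U" "S = T \<union> I" by blast
      have "S - {k} \<notin> W" using inW kI by blast
      then show "S \<in> {S. S \<subseteq> N \<and> yes_decisive W k S}"
        using T kI IN unfolding yes_decisive_def U_def X_def by auto
    qed
    have rec: "T = (T \<union> I) - I" if "T \<in> U" for T using disj[OF that] by blast
    have inj: "inj_on (\<lambda>T. T \<union> I) U"
    proof (rule inj_onI)
      fix T1 T2 assume T12: "T1 \<in> U" "T2 \<in> U" "T1 \<union> I = T2 \<union> I"
      have "T1 = (T1 \<union> I) - I" by (rule rec[OF T12(1)])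
      also have "\<dots> = (T2 \<union> I) - I" by (simp only: T12(3))
      also have "\<dots> = T2" by (rule rec[OF T12(2), symmetric])
      finally show "T1 = T2" .
    qed
    have cT: "card (T \<union> I) = card T + Suc r" if "T \<in> U" for T
      using card_Un_disjoint[OF fT[OF that] fI disj[OF that]] r by simp
    show ?thesis
      unfolding SS_def D sum.reindex[OF inj] o_def
      by (intro sum.cong refl) (simp add: cT cN)
  qed
  have BP: "bloc_players N I i = insert i X" unfolding bloc_players_def X_def by auto
  have iX: "i \<notin> X" unfolding X_def using iI by auto
  have cBP: "card (insert i X) = K + 1" using fX iX unfolding K_def by simp
  have DB: "{S. S \<subseteq> insert i X \<and> yes_decisive (bloc_wins N W I i) i S} = insert i ` U"
  proof (rule set_eqI, rule iffI)
    fix S assume "S \<in> {S. S \<subseteq> insert i X \<and> yes_decisive (bloc_wins N W I i) i S}"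
    then have S: "S \<in> bloc_wins N W I i" unfolding yes_decisive_def by auto
    then show "S \<in> insert i ` U"
    proof (unfold bloc_wins_def, elim UnE)
      assume "S \<in> {S \<union> {i} |S. S \<subseteq> N - I \<and> S \<union> I \<in> W}"
      then obtain T where "T \<subseteq> N - I" "T \<union> I \<in> W" "S = T \<union> {i}" by blast
      then show ?thesis unfolding U_def X_def by blast
    next
      assume "S \<in> {S. S \<subseteq> N - I \<and> S \<in> W}"
      then show ?thesis using inW iI by auto
    qed
  next
    fix S assume "S \<in> insert i ` U"
    then obtain T where T: "T \<in> U" "S = insert i T" by blast
    have Tn: "i \<notin> T" using T iX UX by auto
    have "S \<in> bloc_wins N W I i"
      unfolding bloc_wins_def using T unfolding U_def X_def by auto
    moreover have "S - {i} \<notin> bloc_wins N W I i"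
      unfolding bloc_wins_def using T Tn inW iI by auto
    ultimately show "S \<in> {S. S \<subseteq> insert i X \<and> yes_decisive (bloc_wins N W I i) i S}"
      using T UX unfolding yes_decisive_def by auto
  qed
  have recB: "T = insert i T - {i}" if "T \<in> U" for T using that UX iX by blast
  have injB: "inj_on (insert i) U"
    proof (rule inj_onI)
      fix T1 T2 assume T12: "T1 \<in> U" "T2 \<in> U" "insert i T1 = insert i T2"
      have "T1 = insert i T1 - {i}" by (rule recB[OF T12(1)])
      also have "\<dots> = insert i T2 - {i}" by (simp only: T12(3))
      also have "\<dots> = T2" by (rule recB[OF T12(2), symmetric])
      finally show "T1 = T2" .
    qed
  have cTB: "card (insert i T) = card T + 1" if "T \<in> U" for T
  proof -
    have "i \<notin> T" using that UX iX by blast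
    then show ?thesis using fT[OF that] by simp
  qed
  have SSB: "SS_bloc N W I i = (\<Sum>T\<in>U. real (fact (card T) * fact (K - card T)) / real (fact (K + 1)))"
    unfolding SS_bloc_def BP SS_def cBP DB sum.reindex[OF injB] o_def
    by (intro sum.cong refl) (simp add: cTB)
  have "SS_bloc N W I i = (\<Sum>T\<in>U. fact (card T) * fact (card X - card T) / fact (card X + 1))"
    unfolding SSB K_def by (simp only: of_nat_mult of_nat_fact)
  also have "\<dots> \<le> real (Suc r) * (\<Sum>T\<in>U. fact (card T + r) * fact (card X - card T) / fact (card X + Suc r))"
    by (rule core[OF fX UX up])
  also have "\<dots> = real (card I) * (\<Sum>T\<in>U. real (fact (card T + r) * fact (K - card T)) / real (fact (K + Suc r)))"
    unfolding r K_def by (simp only: of_nat_mult of_nat_fact)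
  also have "\<dots> = (\<Sum>k\<in>I. SS N W k)"
    using SSk by simp
  finally show ?thesis .
qed

lemma no_case:
  assumes svg: "SVG N W" and IN: "I \<subseteq> N" and iI: "i \<in> I" and nb: "\<forall>b\<in>I. no_blocker N W b"
  shows "SS_bloc N W I i \<le> (\<Sum>k\<in>I. SS N W k)"
proof -
  note P = SVG_props[OF svg]
  define X where "X = N - I"
  define D where "D = {T. T \<subseteq> X \<and> T \<notin> W}"
  define U where "U = (\<lambda>T. X - T) ` D"
  define K where "K = card X"
  have fN: "finite N" by (rule P(1))
  have fI: "finite I" using IN fN finite_subset by blast
  have fX: "finite X" unfolding X_def using fN by simp
  have "card I > 0" using fI iI card_gt_0_iff by blast
  then obtain r where r: "card I = Suc r" using gr0_implies_Suc by blast
  have cN: "card N = K + Suc r"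
    unfolding K_def X_def using card_Diff_subset[OF fI IN] card_mono[OF fN IN] r by simp
  have DX: "T \<subseteq> X" if "T \<in> D" for T using that unfolding D_def by blast
  have fT: "finite T" if "T \<in> D" for T using finite_subset[OF _ fX] DX[OF that] by blast
  have XN: "X \<subseteq> N" unfolding X_def by blast
  have win: "S \<in> W" if "S \<subseteq> N" "b \<in> I" "b \<in> S" for S b
    using nb that unfolding no_blocker_def by blast
  have iX: "i \<notin> X" unfolding X_def using iI by auto
  have UX: "U \<subseteq> Pow X" unfolding U_def by blast
  have up: "\<forall>S T. S \<in> U \<and> S \<subseteq> T \<and> T \<subseteq> X \<longrightarrow> T \<in> U"
  proof (intro allI impI)
    fix S' T' assume h: "S' \<in> U \<and> S' \<subseteq> T' \<and> T' \<subseteq> X"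
    then obtain S where S: "S \<in> D" "S' = X - S" unfolding U_def by blast
    have SX: "S \<subseteq> X" by (rule DX[OF S(1)])
    have sub: "X - T' \<subseteq> S" using h S SX by blast
    have "X - T' \<notin> W"
    proof
      assume "X - T' \<in> W"
      then have "S \<in> W" using P(3)[OF _ sub] SX XN by blast
      then show False using S(1) unfolding D_def by blast
    qed
    then have "X - T' \<in> D" unfolding D_def by blast
    moreover have "T' = X - (X - T')" using h by blast
    ultimately show "T' \<in> U" unfolding U_def by blast
  qed
  have cXT: "card (X - T) = K - card T" if "T \<in> D" for T
    unfolding K_def using card_Diff_subset[OF fT[OF that] DX[OF that]] .
  have cTK: "card T \<le> K" if "T \<in> D" for T
    unfolding K_def using card_mono[OF fX DX[OF that]] .
  have recU: "T = X - (X - T)" if "T \<in> D" for T using DX[OF that] by blast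
  have injU: "inj_on (\<lambda>T. X - T) D"
  proof (rule inj_onI)
    fix T1 T2 assume T12: "T1 \<in> D" "T2 \<in> D" "X - T1 = X - T2"
    have "T1 = X - (X - T1)" by (rule recU[OF T12(1)])
    also have "\<dots> = X - (X - T2)" by (simp only: T12(3))
    also have "\<dots> = T2" by (rule recU[OF T12(2), symmetric])
    finally show "T1 = T2" .
  qed
  have recI: "T = insert k T - {k}" if "T \<in> D" "k \<in> I" for T k
    using DX[OF that(1)] that(2) unfolding X_def by blast
  have injI: "inj_on (insert k) D" if kI: "k \<in> I" for k
  proof (rule inj_onI)
    fix T1 T2 assume T12: "T1 \<in> D" "T2 \<in> D" "insert k T1 = insert k T2"
    have "T1 = insert k T1 - {k}" by (rule recI[OF T12(1) kI])
    also have "\<dots> = insert k T2 - {k}" by (simp only: T12(3))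
    also have "\<dots> = T2" by (rule recI[OF T12(2) kI, symmetric])
    finally show "T1 = T2" .
  qed
  have cins: "card (insert k T) = card T + 1" if "T \<in> D" "k \<in> I" for T k
  proof -
    have "k \<notin> T" using DX[OF that(1)] that(2) unfolding X_def by blast
    then show ?thesis using fT[OF that(1)] by simp
  qed
  have SSk: "SS N W k = (\<Sum>T\<in>D. real (fact (card T) * fact (K - card T + r)) / real (fact (K + Suc r)))"
    if kI: "k \<in> I" for k
  proof -
    have Dk: "{S. S \<subseteq> N \<and> yes_decisive W k S} = insert k ` D"
    proof (rule set_eqI, rule iffI)
      fix S assume "S \<in> {S. S \<subseteq> N \<and> yes_decisive W k S}"
      then have S: "S \<subseteq> N" "k \<in> S" "S - {k} \<notin> W" unfolding yes_decisive_def by auto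
      have "S - {k} \<subseteq> X"
      proof
        fix x assume x: "x \<in> S - {k}"
        show "x \<in> X"
        proof (rule ccontr)
          assume "x \<notin> X"
          then have "x \<in> I" using x S(1) unfolding X_def by blast
          then have "S - {k} \<in> W" using win[of "S - {k}" x] x S(1) by blast
          then show False using S(3) by blast
        qed
      qed
      then have "S - {k} \<in> D" using S(3) unfolding D_def by blast
      moreover have "S = insert k (S - {k})" using S(2) by blast
      ultimately show "S \<in> insert k ` D" by blast
    next
      fix S assume "S \<in> insert k ` D"
      then obtain T where T: "T \<in> D" "S = insert k T" by blast
      have SN: "S \<subseteq> N" using T DX[OF T(1)] XN kI IN by blast
      have "S \<in> W" using win[OF SN kI] T by blast
      moreover have "S - {k} = T" using recI[OF T(1) kI] T(2) by simp
      ultimately show "S \<in> {S. S \<subseteq> N \<and> yes_decisive W k S}"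
        using SN T unfolding yes_decisive_def D_def by auto
    qed
    have ar: "K + r - card T = K - card T + r" if "T \<in> D" for T
      using cTK[OF that] by simp
    show ?thesis
      unfolding SS_def Dk sum.reindex[OF injI[OF kI]] o_def
      by (intro sum.cong refl) (simp add: cins[OF _ kI] cN ar)
  qed
  have BP: "bloc_players N I i = insert i X" unfolding bloc_players_def X_def by auto
  have cBP: "card (insert i X) = K + 1" using fX iX unfolding K_def by simp
  have DB: "{S. S \<subseteq> insert i X \<and> yes_decisive (bloc_wins N W I i) i S} = insert i ` D"
  proof (rule set_eqI, rule iffI)
    fix S assume "S \<in> {S. S \<subseteq> insert i X \<and> yes_decisive (bloc_wins N W I i) i S}"
    then have S: "S \<subseteq> insert i X" "i \<in> S" "S - {i} \<notin> bloc_wins N W I i"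
      unfolding yes_decisive_def by auto
    have sX: "S - {i} \<subseteq> X" using S(1) by blast
    have "S - {i} \<notin> W"
    proof
      assume "S - {i} \<in> W"
      then have "S - {i} \<in> bloc_wins N W I i" using sX unfolding bloc_wins_def X_def by blast
      then show False using S(3) by blast
    qed
    then have "S - {i} \<in> D" using sX unfolding D_def by blast
    moreover have "S = insert i (S - {i})" using S(2) by blast
    ultimately show "S \<in> insert i ` D" by blast
  next
    fix S assume "S \<in> insert i ` D"
    then obtain T where T: "T \<in> D" "S = insert i T" by blast
    have TX: "T \<subseteq> X" by (rule DX[OF T(1)])
    have Tn: "i \<notin> T" using TX iX by blast
    have "T \<union> I \<subseteq> N" using TX XN IN by blast
    then have "T \<union> I \<in> W" using win[of "T \<union> I" i] iI by blast
    then have "S \<in> bloc_wins N W I i"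
      unfolding bloc_wins_def using T TX unfolding X_def by blast
    moreover have "S - {i} \<notin> bloc_wins N W I i"
    proof
      assume "S - {i} \<in> bloc_wins N W I i"
      moreover have "S - {i} = T" using T(2) Tn by blast
      ultimately have "T \<in> bloc_wins N W I i" by simp
      then show False unfolding bloc_wins_def using Tn T(1) unfolding D_def by blast
    qed
    ultimately show "S \<in> {S. S \<subseteq> insert i X \<and> yes_decisive (bloc_wins N W I i) i S}"
      using T TX unfolding yes_decisive_def by blast
  qed
  have SSB: "SS_bloc N W I i = (\<Sum>T\<in>D. real (fact (card T) * fact (K - card T)) / real (fact (K + 1)))"
    unfolding SS_bloc_def BP SS_def cBP DB sum.reindex[OF injI[OF iI]] o_def
    by (intro sum.cong refl) (simp add: cins[OF _ iI])
  have "SS_bloc N W I i = (\<Sum>T'\<in>U. fact (card T') * fact (card X - card T') / fact (card X + 1))"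
  proof -
    have "(\<Sum>T'\<in>U. fact (card T') * fact (card X - card T') / fact (card X + 1))
       = (\<Sum>T\<in>D. fact (card (X - T)) * fact (card X - card (X - T)) / fact (card X + 1))"
      unfolding U_def sum.reindex[OF injU] o_def ..
    also have "\<dots> = (\<Sum>T\<in>D. real (fact (card T) * fact (K - card T)) / real (fact (K + 1)))"
    proof (intro sum.cong refl)
      fix T assume T: "T \<in> D"
      have e: "card X - card (X - T) = card T" using cXT[OF T] cTK[OF T] unfolding K_def by simp
      show "fact (card (X - T)) * fact (card X - card (X - T)) / fact (card X + 1)
          = real (fact (card T) * fact (K - card T)) / real (fact (K + 1))"
        unfolding e unfolding cXT[OF T] by (simp only: K_def of_nat_mult of_nat_fact mult.commute)
    qed
    finally show ?thesis using SSB by simp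
  qed
  also have "\<dots> \<le> real (Suc r) * (\<Sum>T'\<in>U. fact (card T' + r) * fact (card X - card T') / fact (card X + Suc r))"
    by (rule core[OF fX UX up])
  also have "(\<Sum>T'\<in>U. fact (card T' + r) * fact (card X - card T') / fact (card X + Suc r))
      = (\<Sum>T\<in>D. real (fact (card T) * fact (K - card T + r)) / real (fact (K + Suc r)))"
  proof -
    have "(\<Sum>T'\<in>U. fact (card T' + r) * fact (card X - card T') / fact (card X + Suc r))
       = (\<Sum>T\<in>D. fact (card (X - T) + r) * fact (card X - card (X - T)) / fact (card X + Suc r))"
      unfolding U_def sum.reindex[OF injU] o_def ..
    also have "\<dots> = (\<Sum>T\<in>D. real (fact (card T) * fact (K - card T + r)) / real (fact (K + Suc r)))"
    proof (intro sum.cong refl)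
      fix T assume T: "T \<in> D"
      have e: "card X - card (X - T) = card T" using cXT[OF T] cTK[OF T] unfolding K_def by simp
      show "fact (card (X - T) + r) * fact (card X - card (X - T)) / fact (card X + Suc r)
          = real (fact (card T) * fact (K - card T + r)) / real (fact (K + Suc r))"
        unfolding e unfolding cXT[OF T] by (simp only: K_def of_nat_mult of_nat_fact mult.commute)
    qed
    finally show ?thesis .
  qed
  also have "real (Suc r) * (\<Sum>T\<in>D. real (fact (card T) * fact (K - card T + r)) / real (fact (K + Suc r)))
      = (\<Sum>k\<in>I. SS N W k)"
    using SSk r by simp
  finally show ?thesis .
qed


lemma coll_ins: "{x \<in> insert a A. P x} = (if P a then insert a {x \<in> A. P x} else {x \<in> A. P x})"
  by auto
lemma pow_coll: "{S. S \<subseteq> A \<and> P S} = {S \<in> Pow A. P S}" by auto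
lemma pow_img: "{f S | S. S \<subseteq> A \<and> P S} = f ` {S \<in> Pow A. P S}" by auto
lemma dec_W: "{S. S \<subseteq> N \<and> yes_decisive W k S} = {S \<in> W. S \<subseteq> N \<and> k \<in> S \<and> S - {k} \<notin> W}"
  unfolding yes_decisive_def by auto

definition W0 :: "nat set set" where "W0 = {{0,1},{0,2},{0,1,2::nat}}"

lemma ex_mono: "\<forall>T \<in> Pow {0,1,2::nat}. \<forall>S \<in> W0. S \<subseteq> T \<longrightarrow> T \<in> W0"
    unfolding W0_def by (simp add: Pow_insert insert_commute)
lemma ex_svg: "SVG {0,1,2} W0"
    unfolding SVG_def
    apply (intro conjI)
    using ex_mono apply (simp_all add: W0_def)
    by blast
lemma ex_d0: "{S. S \<subseteq> {0,1,2::nat} \<and> yes_decisive W0 0 S} = {{0,1},{0,2},{0,1,2}}"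
  unfolding dec_W W0_def coll_ins
  by (simp add: set_eq_subset insert_Diff_if)
lemma ex_d1: "{S. S \<subseteq> {0,1,2::nat} \<and> yes_decisive W0 1 S} = {{0,1}}"
  unfolding dec_W W0_def coll_ins
  by (simp add: set_eq_subset insert_Diff_if)
lemma ex_bp: "bloc_players {0,1,2} {0,1} 0 = {0,2::nat}" unfolding bloc_players_def by auto
lemma ex_diff: "{0,1,2::nat} - {0,1} = {2}" by auto
lemma p2: "Pow {2::nat} = {{},{2}}" by (simp add: Pow_insert insert_commute)
lemma t1: "{S \<in> {{},{2::nat}}. S \<union> {0,1} \<in> W0} = {{},{2}}"
      unfolding coll_ins W0_def by (simp add: set_eq_subset)
lemma t2: "{S. S \<subseteq> {2::nat} \<and> S \<in> W0} = {}"
proof -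
  have "\<forall>S\<in>W0. (0::nat) \<in> S" by (simp add: W0_def)
  then have h: "S \<in> W0 \<Longrightarrow> (0::nat) \<in> S" for S by simp
  show ?thesis
  proof (rule equals0I)
    fix S assume "S \<in> {S. S \<subseteq> {2::nat} \<and> S \<in> W0}"
    then have "S \<subseteq> {2}" "0 \<in> S" using h by simp_all
    then show False by force
  qed
qed
lemma e1: "{S \<union> {0} |S. S \<subseteq> {2::nat} \<and> S \<union> {0,1} \<in> W0} = {{0}, {0,2}}"
  unfolding pow_img p2 t1 by (simp add: insert_commute)
lemma ex_bw: "bloc_wins {0,1,2} W0 {0,1} 0 = {{0},{0,2::nat}}"
  unfolding bloc_wins_def ex_diff e1 t2 by simp
lemma a1: "{0::nat} - {0} = {}" by simp
lemma a2: "{0::nat, 2} - {0} = {2}" by simp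
lemma a3: "({}::nat set) \<notin> {{0},{0,2}}" by simp
lemma a4: "({2}::nat set) \<notin> {{0},{0,2}}" by simp
lemma ex_db: "{S. S \<subseteq> {0,2::nat} \<and> yes_decisive {{0},{0,2}} 0 S} = {{0},{0,2}}"
  unfolding dec_W coll_ins a1 a2 by (simp add: a3 a4)
lemma neqw: "x \<in> B \<Longrightarrow> x \<notin> A \<Longrightarrow> A \<noteq> B" by blast
lemma b1: "{0::nat,1} \<notin> {{0,2},{0,1,2}}"
proof -
  have "{0::nat,1} \<noteq> {0,2}" by (rule neqw[of 2]) simp_all
  moreover have "{0::nat,1} \<noteq> {0,1,2}" by (rule neqw[of 2]) simp_all
  ultimately show ?thesis by simp
qed
lemma b2: "{0::nat,2} \<notin> {{0,1,2}}"
proof -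
  have "{0::nat,2} \<noteq> {0,1,2}" by (rule neqw[of 1]) simp_all
  then show ?thesis by simp
qed
lemma b3: "{0::nat} \<notin> {{0,2}}" by simp
lemma ex_l: "SS_bloc {0,1,2} W0 {0,1} 0 = 1"
  unfolding SS_bloc_def ex_bp ex_bw SS_def ex_db
  by (simp only: sum.insert[OF _ b3] finite.intros sum.empty) (simp add: fact_numeral)
lemma ex_r: "(\<Sum>k \<in> {0,1::nat}. SS {0,1,2} W0 k) = 5/6"
proof -
  have a: "SS {0,1,2} W0 0 = 2/3" unfolding SS_def ex_d0
    by (simp only: sum.insert[OF _ b1] sum.insert[OF _ b2] finite.intros sum.empty) (simp add: fact_numeral)
  have b: "SS {0,1,2} W0 1 = 1/6" unfolding SS_def ex_d1 by (simp add: fact_numeral)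
  show ?thesis using a b by simp
qed
lemma partb: "\<exists>(N :: nat set) W I i.
            SVG N W \<and> I \<subseteq> N \<and> i \<in> I \<and> (\<exists>b \<in> I. yes_blocker W b) \<and>
            SS_bloc N W I i > (\<Sum>k \<in> I. SS N W k)"
proof -
  have yb: "yes_blocker W0 0" unfolding yes_blocker_def W0_def by auto
  have "{0,1::nat} \<subseteq> {0,1,2}" by auto
  then show ?thesis using ex_svg yb ex_l ex_r
    by (intro exI[of _ "{0,1,2::nat}"] exI[of _ W0] exI[of _ "{0,1}"] exI[of _ 0]) simp
qed

theorem theorem2:
  shows "(\<forall>(N :: 'a set) W I i.
            SVG N W \<and> I \<subseteq> N \<and> i \<in> I \<and>
            ((\<forall>b \<in> I. yes_blocker W b) \<or> (\<forall>b \<in> I. no_blocker N W b))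
            \<longrightarrow> SS_bloc N W I i \<le> (\<Sum>k \<in> I. SS N W k))
       \<and> (\<exists>(N :: nat set) W I i.
            SVG N W \<and> I \<subseteq> N \<and> i \<in> I \<and> (\<exists>b \<in> I. yes_blocker W b) \<and>
            SS_bloc N W I i > (\<Sum>k \<in> I. SS N W k))"
proof (rule conjI)
  show "\<forall>(N :: 'a set) W I i.
            SVG N W \<and> I \<subseteq> N \<and> i \<in> I \<and>
            ((\<forall>b \<in> I. yes_blocker W b) \<or> (\<forall>b \<in> I. no_blocker N W b))
            \<longrightarrow> SS_bloc N W I i \<le> (\<Sum>k \<in> I. SS N W k)"
  proof (intro allI impI)
    fix N :: "'a set" and W I i
    assume h: "SVG N W \<and> I \<subseteq> N \<and> i \<in> I \<and>
            ((\<forall>b \<in> I. yes_blocker W b) \<or> (\<forall>b \<in> I. no_blocker N W b))"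
    then have a: "SVG N W" "I \<subseteq> N" "i \<in> I" by auto
    from h have "(\<forall>b \<in> I. yes_blocker W b) \<or> (\<forall>b \<in> I. no_blocker N W b)" by blast
    then show "SS_bloc N W I i \<le> (\<Sum>k \<in> I. SS N W k)"
    proof
      assume "\<forall>b \<in> I. yes_blocker W b"
      then show ?thesis by (rule yes_case[OF a])
    next
      assume "\<forall>b \<in> I. no_blocker N W b"
      then show ?thesis by (rule no_case[OF a])
    qed
  qed
  show "\<exists>(N :: nat set) W I i.
            SVG N W \<and> I \<subseteq> N \<and> i \<in> I \<and> (\<exists>b \<in> I. yes_blocker W b) \<and>
            SS_bloc N W I i > (\<Sum>k \<in> I. SS N W k)"
    by (rule partb)
qed

end
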